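(* The bicyclic monoid $B = \langle p,q : pq = 1 \rangle$ is not sofic.
   Context: The bicyclic monoid is the monoid given by the presentation with two generators $p,q$ and the single relation $pq=1$; every element can be written uniquely as $q^a p^b$ with $a,b$ non-negative integers. For a non-empty finite set $X$, $\mathrm{Map}(X)$ denotes the monoid of all maps $X \to X$ under composition (identity element $\mathrm{Id}_X$), equipped with the Hamming metric $d_X(f,g) = |\{x \in X : f(x) \neq g(x)\}|/|X|$. Let $M$ be a monoid with identity $1_M$, $K \subset M$ finite and $\varepsilon,\alpha>0$. A map $\varphi\colon M \to \mathrm{Map}(X)$ is a $(K,\varepsilon)$-morphism if $d_X(\varphi(k_1k_2),\varphi(k_1)\varphi(k_2)) \le \varepsilon$ for all $k_1,k_2 \in K$ and $d_X(\varphi(1_M),\mathrm{Id}_X) \le \varepsilon$; it is $(K,\alpha)$-injective if $d_X(\varphi(k_1),\varphi(k_2)) \ge \alpha$ for all distinct $k_1,k_2 \in K$. The monoid $M$ is called sofic if for every finite subset $K \subset M$ and every $\varepsilon>0$ there exist a non-empty finite set $X$ and a map $\varphi\colon M \to \mathrm{Map}(X)$ that is a $(K,1-\varepsilon)$-injective $(K,\varepsilon)$-morphism. *)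

theory Defs
  imports Main "HOL.Real"
begin

(* Hamming distance on Map(X), X a finite nonempty set; maps X -> X are
   represented by functions nat => nat mapping X into X (values outside X
   are irrelevant). *)
definition hamming :: "nat set \<Rightarrow> (nat \<Rightarrow> nat) \<Rightarrow> (nat \<Rightarrow> nat) \<Rightarrow> real" where
  "hamming X f g = real (card {x \<in> X. f x \<noteq> g x}) / real (card X)"

definition is_map_into :: "nat set \<Rightarrow> ('a \<Rightarrow> nat \<Rightarrow> nat) \<Rightarrow> bool" where
  "is_map_into X \<phi> \<longleftrightarrow> (\<forall>m x. x \<in> X \<longrightarrow> \<phi> m x \<in> X)"

definition K_eps_morphism ::
  "('a \<Rightarrow> 'a \<Rightarrow> 'a) \<Rightarrow> 'a \<Rightarrow> nat set \<Rightarrow> ('a \<Rightarrow> nat \<Rightarrow> nat) \<Rightarrow> 'a set \<Rightarrow> real \<Rightarrow> bool" where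
  "K_eps_morphism mult one X \<phi> K \<epsilon> \<longleftrightarrow>
     (\<forall>k1\<in>K. \<forall>k2\<in>K. hamming X (\<phi> (mult k1 k2)) (\<phi> k1 \<circ> \<phi> k2) \<le> \<epsilon>) \<and>
     hamming X (\<phi> one) id \<le> \<epsilon>"

definition K_alpha_injective ::
  "nat set \<Rightarrow> ('a \<Rightarrow> nat \<Rightarrow> nat) \<Rightarrow> 'a set \<Rightarrow> real \<Rightarrow> bool" where
  "K_alpha_injective X \<phi> K \<alpha> \<longleftrightarrow>
     (\<forall>k1\<in>K. \<forall>k2\<in>K. k1 \<noteq> k2 \<longrightarrow> hamming X (\<phi> k1) (\<phi> k2) \<ge> \<alpha>)"

definition sofic :: "('a \<Rightarrow> 'a \<Rightarrow> 'a) \<Rightarrow> 'a \<Rightarrow> bool" where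
  "sofic mult one \<longleftrightarrow>
     (\<forall>K :: 'a set. \<forall>\<epsilon> :: real. finite K \<and> \<epsilon> > 0 \<longrightarrow>
        (\<exists>X :: nat set. \<exists>\<phi>. finite X \<and> X \<noteq> {} \<and> is_map_into X \<phi> \<and>
            K_alpha_injective X \<phi> K (1 - \<epsilon>) \<and> K_eps_morphism mult one X \<phi> K \<epsilon>))"

(* Bicyclic monoid <p,q | pq = 1>: the element q^a p^b is encoded as (a,b).
   Product: q^a p^b q^c p^d = q^(a + (c - b)) p^(d + (b - c)) (truncated subtraction). *)
definition bicyclic_mult :: "nat \<times> nat \<Rightarrow> nat \<times> nat \<Rightarrow> nat \<times> nat" where
  "bicyclic_mult u v = (case u of (a, b) \<Rightarrow> case v of (c, d) \<Rightarrow> (a + (c - b), d + (b - c)))"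

definition bicyclic_one :: "nat \<times> nat" where
  "bicyclic_one = (0, 0)"

definition bicyclic_p :: "nat \<times> nat" where "bicyclic_p = (0, 1)"
definition bicyclic_q :: "nat \<times> nat" where "bicyclic_q = (1, 0)"

end

theory Submission
  imports Defs
begin

lemma ham_le: assumes "finite X" "X \<noteq> {}" "hamming X f g \<le> e"
  shows "real (card {x \<in> X. f x \<noteq> g x}) \<le> e * real (card X)"
proof -
  have "real (card X) > 0" using assms by auto
  thus ?thesis using assms(3) by (simp add: hamming_def divide_le_eq)
qed

lemma ham_ge: assumes "finite X" "X \<noteq> {}" "hamming X f g \<ge> e"
  shows "real (card {x \<in> X. f x \<noteq> g x}) \<ge> e * real (card X)"
proof -
  have "real (card X) > 0" using assms by auto
  thus ?thesis using assms(3) by (simp add: hamming_def le_divide_eq)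
qed

theorem theorem5p1:
  shows "\<not> sofic bicyclic_mult bicyclic_one"
proof
  assume "sofic bicyclic_mult bicyclic_one"
  define K where "K = {(0::nat,0::nat),(0,1),(1,0),(1,1)}"
  define e where "e = (1/10::real)"
  obtain X \<phi> where X: "finite X" "X \<noteq> {}" "is_map_into X \<phi>"
     and inj: "K_alpha_injective X \<phi> K (1 - e)" and mor: "K_eps_morphism bicyclic_mult bicyclic_one X \<phi> K e"
    proof -
    have "finite K" "e > 0" unfolding K_def e_def by auto
    thus ?thesis using \<open>sofic _ _\<close> that unfolding sofic_def by blast
  qed
  define P where "P = \<phi> (0,1)"
  define Q where "Q = \<phi> (1,0)"
  define I where "I = \<phi> (0,0)"
  define R where "R = \<phi> (1,1)"
  define n where "n = real (card X)"
  have QX: "\<And>x. x \<in> X \<Longrightarrow> Q x \<in> X" using X(3) unfolding is_map_into_def Q_def by auto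
  have m1: "bicyclic_mult (0,1) (1,0) = (0,0)" "bicyclic_mult (1,0) (0,1) = (1,1)"
    by (auto simp: bicyclic_mult_def)
  have "hamming X I (P \<circ> Q) \<le> e" using mor m1 unfolding K_eps_morphism_def K_def I_def P_def Q_def
    by simp
  hence c1: "real (card {x \<in> X. I x \<noteq> (P \<circ> Q) x}) \<le> e * n" using ham_le X n_def by blast
  have "hamming X R (Q \<circ> P) \<le> e" using mor m1 unfolding K_eps_morphism_def K_def R_def P_def Q_def
    by simp
  hence c2: "real (card {x \<in> X. R x \<noteq> (Q \<circ> P) x}) \<le> e * n" using ham_le X n_def by blast
  have "hamming X I id \<le> e" using mor unfolding K_eps_morphism_def I_def bicyclic_one_def by blast
  hence c3: "real (card {x \<in> X. I x \<noteq> id x}) \<le> e * n" using ham_le X n_def by blast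
  have "hamming X R I \<ge> 1 - e" using inj unfolding K_alpha_injective_def K_def R_def I_def by auto
  hence c4: "real (card {x \<in> X. R x \<noteq> I x}) \<ge> (1 - e) * n" using ham_ge X n_def by blast
  define A where "A = X - ({x \<in> X. I x \<noteq> (P \<circ> Q) x} \<union> {x \<in> X. I x \<noteq> id x})"
  have PQA: "\<And>x. x \<in> A \<Longrightarrow> P (Q x) = x" unfolding A_def by auto
  have "card X \<le> card A + card ({x \<in> X. I x \<noteq> (P \<circ> Q) x} \<union> {x \<in> X. I x \<noteq> id x})"
  proof -
    have "X \<subseteq> A \<union> ({x \<in> X. I x \<noteq> (P \<circ> Q) x} \<union> {x \<in> X. I x \<noteq> id x})" unfolding A_def by auto
    hence "card X \<le> card (A \<union> ({x \<in> X. I x \<noteq> (P \<circ> Q) x} \<union> {x \<in> X. I x \<noteq> id x}))"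
      by (intro card_mono) (use X(1) A_def in auto)
    also have "\<dots> \<le> card A + card ({x \<in> X. I x \<noteq> (P \<circ> Q) x} \<union> {x \<in> X. I x \<noteq> id x})" by (rule card_Un_le)
    finally show ?thesis .
  qed
  moreover have "card ({x \<in> X. I x \<noteq> (P \<circ> Q) x} \<union> {x \<in> X. I x \<noteq> id x}) \<le>
     card {x \<in> X. I x \<noteq> (P \<circ> Q) x} + card {x \<in> X. I x \<noteq> id x}" by (rule card_Un_le)
  ultimately have cA: "real (card A) \<ge> n - 2 * e * n" using c1 c3 unfolding n_def by linarith
  have injQ: "inj_on Q A" using PQA by (metis inj_onI)
  have cQA: "card (Q ` A) = card A" using card_image[OF injQ] .
  have QAX: "Q ` A \<subseteq> X" using QX A_def by auto
  have QP: "\<And>y. y \<in> Q ` A \<Longrightarrow> Q (P y) = y" using PQA by auto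
  have sub: "{x \<in> X. R x \<noteq> I x} \<subseteq> {x \<in> X. R x \<noteq> (Q \<circ> P) x} \<union> (X - Q ` A) \<union> {x \<in> X. I x \<noteq> id x}"
    using QP by auto
  have "card {x \<in> X. R x \<noteq> I x} \<le> card ({x \<in> X. R x \<noteq> (Q \<circ> P) x} \<union> (X - Q ` A) \<union> {x \<in> X. I x \<noteq> id x})"
    by (rule card_mono[OF _ sub]) (use X(1) in auto)
  also have "\<dots> \<le> card ({x \<in> X. R x \<noteq> (Q \<circ> P) x} \<union> (X - Q ` A)) + card {x \<in> X. I x \<noteq> id x}"
    by (rule card_Un_le)
  also have "\<dots> \<le> card {x \<in> X. R x \<noteq> (Q \<circ> P) x} + card (X - Q ` A) + card {x \<in> X. I x \<noteq> id x}"
    using card_Un_le[of "{x \<in> X. R x \<noteq> (Q \<circ> P) x}" "X - Q ` A"] by linarith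
  finally have f: "card {x \<in> X. R x \<noteq> I x} \<le> card {x \<in> X. R x \<noteq> (Q \<circ> P) x} + card (X - Q ` A) + card {x \<in> X. I x \<noteq> id x}" .
  have "card (X - Q ` A) = card X - card (Q ` A)" using card_Diff_subset[OF finite_subset[OF QAX X(1)] QAX] .
  moreover have "card (Q ` A) \<le> card X" using card_mono[OF X(1) QAX] .
  ultimately have "real (card (X - Q ` A)) = n - real (card A)" using cQA n_def by simp
  moreover have "real (card {x \<in> X. R x \<noteq> I x}) \<le> real (card {x \<in> X. R x \<noteq> (Q \<circ> P) x}) + real (card (X - Q ` A)) + real (card {x \<in> X. I x \<noteq> id x})"
    using f by linarith
  ultimately have "(1 - e) * n \<le> e * n + (n - (n - 2 * e * n)) + e * n" using c2 c3 c4 cA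
    by linarith
  moreover have "n > 0" using X n_def by auto
  ultimately show False unfolding e_def by simp
qed

end
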